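(* Assume $|\mathcal X|>2$, $\theta>0$, $u\in(0,1)$, Nakagami-$(p,q)$ fading, and let $\rho^*=\rho^*(\theta,u)$. Let $\mathsf q$ be a corner point of the interference-cloned Q cell $Q_{\mathsf x}(\rho^* )$ (a point of $\partial Q_{\mathsf x}(\rho^* )$ where two boundary arcs, belonging to the distance-ratio circles of two distinct interferers $\mathsf x',\mathsf x''$, meet), and suppose that $\mathsf x',\mathsf x''$ are the only interferers at minimal distance from $\mathsf q$. Then, with only the two nearest interferers taken into account, $\mathbb P\!\left(\frac{h_1r_1^{-\alpha}}{h_2r_2^{-\alpha}+h_3r_3^{-\alpha}}>\theta\right)=u$ at $\mathsf q$; in particular $\mathsf q\in\partial Q^{(2)}_{\mathsf x}$.
   Context: Setting: locally finite $\mathcal X\subset\mathbb{R}^2$, path loss exponent $\alpha>0$, unit powers; Nakagami-$(p,q)$ fading: serving fading $h_1\sim\mathrm{Gamma}(p,\text{rate }p)$, interferer fadings $h_2,h_3,\dots\sim\mathrm{Gamma}(q,\text{rate }q)$, all independent. $H^*=h_1/(h_2+h_3)$ with cdf $F_{H^*}$ and quantile $F_{H^*}^{-1}$; $\rho^*(\theta,u)=(\theta/F_{H^*}^{-1}(1-u))^{1/\alpha}$. Q cell: $Q_{\mathsf x}(\rho)=\{\mathsf y:\min_{\mathsf x'\in\mathcal X\setminus\{\mathsf x\}}\|\mathsf x'-\mathsf y\|>\rho\|\mathsf x-\mathsf y\|\}$; its boundary consists of arcs of the circles $\{\mathsf y:\|\mathsf x'-\mathsf y\|=\rho\|\mathsf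 x-\mathsf y\|\}$. For a location $\mathsf y$ with $\mathsf x$ as nearest point of $\mathcal X$, let $r_1=\|\mathsf x-\mathsf y\|\le r_2\le r_3$ be the three smallest distances from $\mathsf y$ to points of $\mathcal X$. Second-order Q cell: $Q^{(2)}_{\mathsf x}=\{\mathsf y:\ \mathsf x\text{ nearest to }\mathsf y,\ \mathbb P(h_1r_1^{-\alpha}/(h_2r_2^{-\alpha}+h_3r_3^{-\alpha})>\theta)>u\}$. *)

theory Defs
  imports "HOL-Probability.Probability"
begin

type_synonym pt = "real ^ 2"

definition gamma_dens :: "real \<Rightarrow> real \<Rightarrow> real \<Rightarrow> ennreal" where
  "gamma_dens k b x = (if 0 < x then ennreal (b powr k * x powr (k - 1) * exp (- b * x) / Gamma k) else 0)"

text \<open>Law of Nakagami-m power fading: Gamma(m, rate m).\<close>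
definition nak :: "real \<Rightarrow> real measure" where
  "nak m = density lborel (gamma_dens m m)"

definition fad :: "real \<Rightarrow> real \<Rightarrow> (real \<times> real \<times> real) measure" where
  "fad p q = nak p \<Otimes>\<^sub>M (nak q \<Otimes>\<^sub>M nak q)"

definition F_H :: "real \<Rightarrow> real \<Rightarrow> real \<Rightarrow> real" where
  "F_H p q t = measure (fad p q) {(h1, h2, h3). h1 / (h2 + h3) \<le> t}"

definition F_H_inv :: "real \<Rightarrow> real \<Rightarrow> real \<Rightarrow> real" where
  "F_H_inv p q v = Inf {t. v \<le> F_H p q t}"

definition rho_star :: "real \<Rightarrow> real \<Rightarrow> real \<Rightarrow> real \<Rightarrow> real \<Rightarrow> real" where
  "rho_star p q \<alpha> \<theta> u = (\<theta> / F_H_inv p q (1 - u)) powr (1 / \<alpha>)"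

definition succ_prob :: "real \<Rightarrow> real \<Rightarrow> real \<Rightarrow> real \<Rightarrow> real \<Rightarrow> real \<Rightarrow> real \<Rightarrow> real" where
  "succ_prob p q \<alpha> \<theta> r1 r2 r3 = measure (fad p q)
     {(h1, h2, h3). h1 * r1 powr (-\<alpha>) / (h2 * r2 powr (-\<alpha>) + h3 * r3 powr (-\<alpha>)) > \<theta>}"

definition locally_finite :: "pt set \<Rightarrow> bool" where
  "locally_finite X \<longleftrightarrow> (\<forall>R. finite (X \<inter> cball 0 R))"

text \<open>Q cell: the minimum over X - {x} exceeds rho*|x-y| (min exists by local finiteness).\<close>
definition Qcell :: "pt set \<Rightarrow> pt \<Rightarrow> real \<Rightarrow> pt set" where
  "Qcell X x \<rho> = {y. \<forall>x'\<in>X - {x}. dist x' y > \<rho> * dist x y}"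

definition ratio_circle :: "pt \<Rightarrow> pt \<Rightarrow> real \<Rightarrow> pt set" where
  "ratio_circle x x' \<rho> = {y. dist x' y = \<rho> * dist x y}"

definition kdist :: "pt set \<Rightarrow> pt \<Rightarrow> nat \<Rightarrow> real" where
  "kdist X y k = Inf {r. k \<le> card {z\<in>X. dist z y \<le> r}}"

definition Q2cell :: "pt set \<Rightarrow> pt \<Rightarrow> real \<Rightarrow> real \<Rightarrow> real \<Rightarrow> real \<Rightarrow> real \<Rightarrow> pt set" where
  "Q2cell X x p q \<alpha> \<theta> u = {y. (\<forall>z\<in>X. dist x y \<le> dist z y) \<and>
      succ_prob p q \<alpha> \<theta> (dist x y) (kdist X y 2) (kdist X y 3) > u}"

end

theory Submission imports Defs begin

lemma gamma_dens_meas[measurable]: "gamma_dens k b \<in> borel_measurable borel"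
  unfolding gamma_dens_def by measurable

lemma nak_prob: assumes m: "m > 0" shows "prob_space (nak m)"
proof
  have "emeasure (nak m) (space (nak m)) = (\<integral>\<^sup>+x. gamma_dens m m x \<partial>lborel)"
    unfolding nak_def by (simp add: emeasure_density)
  also have "\<dots> = \<bar>1/m\<bar> * (\<integral>\<^sup>+x. gamma_dens m m (0 + (1/m) * x) \<partial>lborel)"
    by (rule nn_integral_real_affine) (use m in auto)
  also have "(\<lambda>x. gamma_dens m m (0 + (1/m) * x)) = (\<lambda>x. ennreal (m / Gamma m) * ennreal (indicator {0..} x * x powr (m - 1) / exp x))"
  proof
    fix x :: real
    show "gamma_dens m m (0 + (1/m) * x) = ennreal (m / Gamma m) * ennreal (indicator {0..} x * x powr (m - 1) / exp x)"
    proof (cases "x > 0")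
      case True
      have G: "Gamma m > 0" using m by (simp add: Gamma_real_pos)
      have "m powr m * (x / m) powr (m - 1) * exp (- m * (x/m)) / Gamma m = (m / Gamma m) * (x powr (m - 1) / exp x)"
        using m True G by (simp add: powr_divide powr_diff field_simps exp_minus)
      then show ?thesis using True m G
        by (simp add: gamma_dens_def ennreal_mult'[symmetric] divide_nonneg_pos)
    next
      case False
      then show ?thesis using m by (auto simp: gamma_dens_def indicator_def zero_less_divide_iff)
    qed
  qed
  also have "(\<integral>\<^sup>+x. ennreal (m / Gamma m) * ennreal (indicator {0..} x * x powr (m - 1) / exp x) \<partial>lborel)
     = ennreal (m / Gamma m) * ennreal (Gamma m)"
    by (subst nn_integral_cmult) (auto simp: Gamma_conv_nn_integral_real[OF m])
  also have "\<bar>1/m\<bar> * (ennreal (m / Gamma m) * ennreal (Gamma m)) = 1"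
  proof -
    have G: "Gamma m > 0" using m by (rule Gamma_real_pos)
    have "ennreal (m / Gamma m) * ennreal (Gamma m) = ennreal m"
    proof -
      have "ennreal (m / Gamma m) * ennreal (Gamma m) = ennreal (m / Gamma m * Gamma m)"
        using G m by (intro ennreal_mult'[symmetric]) simp
      also have "m / Gamma m * Gamma m = m" using G by (simp add: field_simps del: Gamma_real_pos)
      finally show ?thesis .
    qed
    then show ?thesis using m by (simp add: ennreal_mult'[symmetric])
  qed
  finally show "emeasure (nak m) (space (nak m)) = 1" .
qed


lemma sets_nak[simp, measurable_cong]: "sets (nak m) = sets borel"
  unfolding nak_def by simp

lemma space_nak[simp]: "space (nak m) = UNIV"
  unfolding nak_def by simp

lemma sets_fad[simp, measurable_cong]: "sets (fad p q) = sets (borel \<Otimes>\<^sub>M (borel \<Otimes>\<^sub>M borel))"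
  unfolding fad_def by (intro sets_pair_measure_cong) simp_all

lemma space_fad[simp]: "space (fad p q) = UNIV"
  unfolding fad_def by (simp add: space_pair_measure)

lemma fad_prob: "p > 0 \<Longrightarrow> q > 0 \<Longrightarrow> prob_space (fad p q)"
  unfolding fad_def by (intro prob_space_pair nak_prob)

lemma AE_nak: assumes "m > 0" shows "AE x in nak m. x > 0 \<and> x \<noteq> a"
proof -
  have "AE x in lborel. x \<noteq> a" by (rule AE_lborel_singleton)
  then have "AE x in lborel. 0 < gamma_dens m m x \<longrightarrow> x > 0 \<and> x \<noteq> a"
    by eventually_elim (auto simp: gamma_dens_def split: if_splits)
  then show ?thesis unfolding nak_def by (subst AE_density) auto
qed

lemma AE_fad_sets: "{x \<in> space (nak p \<Otimes>\<^sub>M (nak q \<Otimes>\<^sub>M nak q)). fst x > 0 \<and> fst (snd x) > 0 \<and> snd (snd x) > 0 \<and> fst x \<noteq> t * (fst (snd x) + snd (snd x))} \<in> sets (nak p \<Otimes>\<^sub>M (nak q \<Otimes>\<^sub>M nak q))"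
  by measurable

lemma AE_fad:
  assumes p: "p > 0" and q: "q > 0"
  shows "AE h in fad p q. fst h > 0 \<and> fst (snd h) > 0 \<and> snd (snd h) > 0
      \<and> fst h \<noteq> t * (fst (snd h) + snd (snd h))"
proof -
  interpret P: prob_space "nak p" by (rule nak_prob[OF p])
  interpret Q: prob_space "nak q" by (rule nak_prob[OF q])
  interpret QQ: prob_space "nak q \<Otimes>\<^sub>M nak q" by (intro prob_space_pair nak_prob q)
  interpret PQ: pair_sigma_finite "nak q" "nak q" by standard
  interpret PQQ: pair_sigma_finite "nak p" "nak q \<Otimes>\<^sub>M nak q" by standard
  have posq: "AE y in nak q. y > 0" using AE_nak[OF q, of 0] by (rule eventually_mono) simp
  have qq: "AE y in nak q \<Otimes>\<^sub>M nak q. fst y > 0 \<and> snd y > 0"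
  proof (rule PQ.AE_pair_measure)
    show "{x \<in> space (nak q \<Otimes>\<^sub>M nak q). 0 < fst x \<and> 0 < snd x} \<in> sets (nak q \<Otimes>\<^sub>M nak q)"
      by measurable
    show "AE x in nak q. AE y in nak q. 0 < fst (x, y) \<and> 0 < snd (x, y)"
      using posq
    proof (rule eventually_mono)
      fix x :: real assume "x > 0"
      show "AE y in nak q. 0 < fst (x, y) \<and> 0 < snd (x, y)"
        using posq by (rule eventually_mono) (simp add: \<open>x > 0\<close>)
    qed
  qed
  have "AE y in nak q \<Otimes>\<^sub>M nak q. AE x in nak p. x > 0 \<and> fst y > 0 \<and> snd y > 0 \<and> x \<noteq> t * (fst y + snd y)"
    using qq
  proof (rule eventually_mono)
    fix y :: "real \<times> real" assume y: "fst y > 0 \<and> snd y > 0"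
    show "AE x in nak p. x > 0 \<and> fst y > 0 \<and> snd y > 0 \<and> x \<noteq> t * (fst y + snd y)"
      using AE_nak[OF p, of "t * (fst y + snd y)"] by (rule eventually_mono) (use y in simp)
  qed
  then have "AE x in nak p. AE y in nak q \<Otimes>\<^sub>M nak q. x > 0 \<and> fst y > 0 \<and> snd y > 0 \<and> x \<noteq> t * (fst y + snd y)"
    by (rule iffD2[OF PQQ.AE_commute[of "\<lambda>x y. x > 0 \<and> fst y > 0 \<and> snd y > 0 \<and> x \<noteq> t * (fst y + snd y)", OF AE_fad_sets]])
  then have "AE h in nak p \<Otimes>\<^sub>M (nak q \<Otimes>\<^sub>M nak q). fst h > 0 \<and> fst (snd h) > 0 \<and> snd (snd h) > 0 \<and> fst h \<noteq> t * (fst (snd h) + snd (snd h))"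
    by (intro PQQ.AE_pair_measure[OF AE_fad_sets]) (simp only: fst_conv snd_conv)
  then show ?thesis unfolding fad_def .
qed

lemma trip_eq: "{(h1, h2, h3). P h1 h2 h3} = {h. P (fst h) (fst (snd h)) (snd (snd h))}"
  by auto

definition Hrat :: "real \<times> real \<times> real \<Rightarrow> real" where
  "Hrat h = fst h / (fst (snd h) + snd (snd h))"

lemma Hrat_meas[measurable]: "Hrat \<in> borel_measurable (fad p q)"
  unfolding Hrat_def by measurable

lemma Hle_sets: "{(h1, h2, h3). h1 / (h2 + h3) \<le> s} \<in> sets (fad p q)"
  using measurable_sets[OF Hrat_meas[of p q], of "{..s}"] by (simp add: Hrat_def vimage_def trip_eq)

lemma F_H_cdf: "F_H p q s = cdf (distr (fad p q) borel Hrat) s"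
proof -
  have "cdf (distr (fad p q) borel Hrat) s = measure (fad p q) (Hrat -` {..s} \<inter> space (fad p q))"
    unfolding cdf_def by (subst measure_distr) auto
  also have "Hrat -` {..s} \<inter> space (fad p q) = {(h1, h2, h3). h1 / (h2 + h3) \<le> s}"
    by (auto simp: Hrat_def)
  finally show ?thesis unfolding F_H_def by simp
qed

lemma AE_Hrat: assumes p: "p > 0" and q: "q > 0"
  shows "AE h in fad p q. Hrat h \<noteq> s \<and> Hrat h > 0"
  using AE_fad[OF p q, of s]
  by eventually_elim (auto simp: Hrat_def field_simps)

lemma F_H_props:
  assumes p: "p > 0" and q: "q > 0"
  shows "continuous_on UNIV (F_H p q)" "mono (F_H p q)" "\<And>s. s \<le> 0 \<Longrightarrow> F_H p q s = 0"
    "(\<lambda>n. F_H p q (real n)) \<longlonglongrightarrow> 1"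
    "\<And>s. measure (fad p q) {h. Hrat h > s} = 1 - F_H p q s"
proof -
  interpret M: prob_space "fad p q" by (rule fad_prob[OF p q])
  define D where "D = distr (fad p q) borel Hrat"
  interpret D: real_distribution D
    unfolding D_def
  proof (rule real_distribution.intro)
    show "prob_space (distr (fad p q) borel Hrat)" by (rule M.prob_space_distr) simp
  qed (simp add: real_distribution_axioms_def)
  have F: "F_H p q = cdf D" unfolding D_def using F_H_cdf by blast
  have "measure D {s} = 0" for s
  proof -
    have "measure D {s} = measure (fad p q) (Hrat -` {s} \<inter> space (fad p q))"
      unfolding D_def by (subst measure_distr) auto
    also have "\<dots> = measure (fad p q) {}"
    proof (rule measure_eq_AE)
      show "Hrat -` {s} \<inter> space (fad p q) \<in> sets (fad p q)" by measurable
    qed (use AE_Hrat[OF p q, of s] in \<open>auto elim: eventually_mono\<close>)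
    finally show ?thesis by simp
  qed
  then have "isCont (cdf D) s" for s
    using D.finite_borel_measure_M finite_borel_measure.isCont_cdf by blast
  then show "continuous_on UNIV (F_H p q)" unfolding F by (simp add: continuous_at_imp_continuous_on)
  show "mono (F_H p q)" unfolding F mono_def using D.cdf_nondecreasing by blast
  show "(\<lambda>n. F_H p q (real n)) \<longlonglongrightarrow> 1" unfolding F by (rule D.cdf_lim_infty_prob)
  show "F_H p q s = 0" if "s \<le> 0" for s
  proof -
    have "F_H p q s = measure (fad p q) {(h1, h2, h3). h1 / (h2 + h3) \<le> s}" by (simp add: F_H_def)
    also have "\<dots> = measure (fad p q) {}"
    proof (rule measure_eq_AE)
      show "{(h1, h2, h3). h1 / (h2 + h3) \<le> s} \<in> sets (fad p q)"
        using measurable_sets[OF Hrat_meas[of p q], of "{..s}"] by (simp add: Hrat_def vimage_def trip_eq)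
      show "AE h in fad p q. (h \<in> {(h1, h2, h3). h1 / (h2 + h3) \<le> s}) = (h \<in> {})"
        using AE_Hrat[OF p q, of s]
      proof eventually_elim
        case (elim h)
        have "h \<in> {(h1, h2, h3). h1 / (h2 + h3) \<le> s} \<longleftrightarrow> Hrat h \<le> s"
          by (cases h) (simp add: Hrat_def)
        then show ?case using elim that by simp
      qed
    qed simp
    finally show ?thesis by simp
  qed
  show "measure (fad p q) {h. Hrat h > s} = 1 - F_H p q s" for s
  proof -
    have e: "{h. Hrat h > s} = space (fad p q) - {(h1, h2, h3). h1 / (h2 + h3) \<le> s}"
      by (auto simp: Hrat_def)
    have "measure (fad p q) {h. Hrat h > s} = measure (fad p q) (space (fad p q) - {(h1, h2, h3). h1 / (h2 + h3) \<le> s})"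
      by (simp only: e)
    also have "\<dots> = 1 - measure (fad p q) {(h1, h2, h3). h1 / (h2 + h3) \<le> s}"
      by (rule M.prob_compl[OF Hle_sets])
    finally show ?thesis by (simp only: F_H_def)
  qed
qed

lemma quantile_props:
  fixes G :: "real \<Rightarrow> real"
  assumes cont: "continuous_on UNIV G" and mono: "mono G" and zero: "\<And>s. s \<le> 0 \<Longrightarrow> G s = 0"
    and lim: "(\<lambda>n. G (real n)) \<longlonglongrightarrow> 1" and v: "0 < v" "v < 1"
  defines "t \<equiv> Inf {s. v \<le> G s}"
  shows "t > 0" "G t = v" "\<And>s. s < t \<Longrightarrow> G s < v"
proof -
  let ?S = "{s. v \<le> G s}"
  have "eventually (\<lambda>n. G (real n) > v) sequentially"
    using lim v by (intro order_tendstoD) auto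
  then obtain n where "G (real n) > v" by (auto dest: eventually_happens)
  then have "real n \<in> ?S" by simp
  then have ne: "?S \<noteq> {}" by blast
  have pos: "s > 0" if "s \<in> ?S" for s
    using that zero v by (cases "s \<le> 0") auto
  have bdd: "bdd_below ?S"
  proof (rule bdd_belowI)
    fix s assume "s \<in> ?S"
    then show "0 \<le> s" using pos[of s] by simp
  qed
  have cl: "closed ?S"
    by (rule closed_Collect_le) (auto intro: cont continuous_on_const)
  have tS: "t \<in> ?S" unfolding t_def by (rule closed_contains_Inf[OF ne bdd cl])
  then show "t > 0" using pos by blast
  show below: "G s < v" if "s < t" for s
  proof (rule ccontr)
    assume "\<not> G s < v"
    then have "s \<in> ?S" by simp
    then have "t \<le> s" unfolding t_def by (rule cInf_lower[OF _ bdd])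
    with that show False by simp
  qed
  show "G t = v"
  proof (rule ccontr)
    assume "G t \<noteq> v"
    with tS have gt: "G t > v" by simp
    have "isCont G t" using cont by (simp add: continuous_on_eq_continuous_at)
    then have "eventually (\<lambda>s. G s > v) (at t)"
      using gt by (metis (mono_tags, lifting) eventually_at_topological isCont_def order_tendstoD(1) tendsto_def eventually_at_filter)
    then have "eventually (\<lambda>s. G s > v) (at_left t)"
      by (simp add: eventually_at_split)
    moreover have "eventually (\<lambda>s. s < t) (at_left t)" by (auto simp: eventually_at_filter)
    ultimately have "eventually (\<lambda>s. G s > v \<and> s < t) (at_left t)" by (rule eventually_conj)
    then obtain s where "G s > v" "s < t" using eventually_happens trivial_limit_at_left_real by blast
    with below show False by force
  qed
qed


lemma succ_sets: "{(h1, h2, h3). h1 * a / (h2 * b + h3 * c) > th} \<in> sets (fad p q)"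
proof -
  have "(\<lambda>h. fst h * a / (fst (snd h) * b + snd (snd h) * c)) \<in> borel_measurable (fad p q)"
    by measurable
  from measurable_sets[OF this, of "{th<..}"] show ?thesis by (simp add: vimage_def trip_eq)
qed

lemma Hgt_sets: "{h. Hrat h > s} \<in> sets (fad p q)"
  using measurable_sets[OF Hrat_meas[of p q], of "{s<..}"] by (simp add: vimage_def)

lemma succ_eq:
  assumes p: "p > 0" and q: "q > 0" and th: "\<theta> > 0" and t: "t > 0" and r1: "r1 > 0"
    and rho: "\<rho> > 0" and rp: "\<rho> powr \<alpha> = \<theta> / t"
  shows "succ_prob p q \<alpha> \<theta> r1 (\<rho> * r1) (\<rho> * r1) = measure (fad p q) {h. Hrat h > t}"
proof -
  define a where "a = r1 powr (-\<alpha>)"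
  define b where "b = (\<rho> * r1) powr (-\<alpha>)"
  have apos: "a > 0" unfolding a_def using r1 by simp
  have b: "b = \<rho> powr (-\<alpha>) * a" unfolding a_def b_def using rho r1 by (simp add: powr_mult)
  have ab: "a / b = \<theta> / t" using apos rho rp by (simp add: b powr_minus field_simps)
  have "{(h1, h2, h3). h1 * a / (h2 * b + h3 * b) > \<theta>} = {h. Hrat h > t}"
  proof (safe)
    fix h1 h2 h3 :: real
    have e: "h1 * a / (h2 * b + h3 * b) = h1 / (h2 + h3) * (\<theta> / t)"
      by (simp add: distrib_right[symmetric] times_divide_times_eq ab[symmetric])
    have c: "\<theta> / t > 0" using th t by simp
    have "h1 / (h2 + h3) * (\<theta> / t) > \<theta> \<longleftrightarrow> (\<theta> / t) * t < (\<theta> / t) * (h1 / (h2 + h3))"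
      using t by (simp add: mult.commute)
    also have "\<dots> \<longleftrightarrow> h1 / (h2 + h3) > t" by (rule mult_less_cancel_left_pos[OF c])
    finally have "h1 / (h2 + h3) * (\<theta> / t) > \<theta> \<longleftrightarrow> h1 / (h2 + h3) > t" .
    then show "\<theta> < h1 * a / (h2 * b + h3 * b) \<Longrightarrow> t < Hrat (h1, h2, h3)"
      and "t < Hrat (h1, h2, h3) \<Longrightarrow> \<theta> < h1 * a / (h2 * b + h3 * b)"
      by (simp_all add: e Hrat_def)
  qed
  then show ?thesis unfolding succ_prob_def a_def b_def by simp
qed

lemma succ_lower:
  assumes p: "p > 0" and q: "q > 0" and th: "\<theta> > 0" and al: "\<alpha> > 0" and r1: "r1 > 0"
    and m: "m > 0" and r2: "r2 \<ge> m" and r3: "r3 \<ge> m"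
  shows "measure (fad p q) {h. Hrat h > \<theta> * (r1 / m) powr \<alpha>} \<le> succ_prob p q \<alpha> \<theta> r1 r2 r3"
proof -
  interpret M: prob_space "fad p q" by (rule fad_prob[OF p q])
  define a where "a = r1 powr (-\<alpha>)"
  define b2 where "b2 = r2 powr (-\<alpha>)"
  define b3 where "b3 = r3 powr (-\<alpha>)"
  define bm where "bm = m powr (-\<alpha>)"
  define s where "s = \<theta> * (r1 / m) powr \<alpha>"
  have apos: "a > 0" unfolding a_def using r1 by simp
  have b2pos: "b2 > 0" unfolding b2_def using r2 m by simp
  have b3pos: "b3 > 0" unfolding b3_def using r3 m by simp
  have b2le: "b2 \<le> bm" unfolding b2_def bm_def using r2 m al by (intro powr_mono2') auto
  have b3le: "b3 \<le> bm" unfolding b3_def bm_def using r3 m al by (intro powr_mono2') auto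
  have bmpos: "bm > 0" unfolding bm_def using m by simp
  have key: "s * (a / bm) = \<theta>"
    unfolding s_def a_def bm_def using r1 m
    by (simp add: powr_divide powr_minus field_simps)
  have "AE h in fad p q. h \<in> {h. Hrat h > s} \<longrightarrow> h \<in> {(h1, h2, h3). h1 * a / (h2 * b2 + h3 * b3) > \<theta>}"
    using AE_fad[OF p q, of 0]
  proof eventually_elim
    case (elim h)
    obtain h1 h2 h3 where h: "h = (h1, h2, h3)" by (cases h) auto
    have pos: "h1 > 0" "h2 > 0" "h3 > 0" using elim by (auto simp: h)
    show ?case
    proof
      assume "h \<in> {h. Hrat h > s}"
      then have gt: "h1 / (h2 + h3) > s" by (simp add: h Hrat_def)
      have D: "h2 * b2 + h3 * b3 \<le> (h2 + h3) * bm"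
        using pos b2le b3le by (simp add: distrib_right add_mono)
      have Dpos: "h2 * b2 + h3 * b3 > 0" using pos b2pos b3pos by (intro add_pos_pos mult_pos_pos)
      have "\<theta> = s * (a / bm)" using key by simp
      also have "\<dots> < h1 / (h2 + h3) * (a / bm)"
        using gt apos bmpos by (intro mult_strict_right_mono) auto
      also have "\<dots> = h1 * a / ((h2 + h3) * bm)" by (simp add: times_divide_times_eq)
      also have "\<dots> \<le> h1 * a / (h2 * b2 + h3 * b3)"
        using pos apos D Dpos by (intro frac_le) auto
      finally show "h \<in> {(h1, h2, h3). h1 * a / (h2 * b2 + h3 * b3) > \<theta>}" by (simp add: h)
    qed
  qed
  then have "measure (fad p q) {h. Hrat h > s} \<le> measure (fad p q) {(h1, h2, h3). h1 * a / (h2 * b2 + h3 * b3) > \<theta>}"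
    by (rule M.finite_measure_mono_AE) (rule succ_sets)
  then show ?thesis unfolding succ_prob_def s_def a_def b2_def b3_def .
qed


lemma lf_finite:
  assumes "locally_finite X" shows "finite {z\<in>X. dist z y \<le> r}"
proof -
  have "{z\<in>X. dist z y \<le> r} \<subseteq> X \<inter> cball 0 (norm y + r)"
  proof
    fix z assume z: "z \<in> {z\<in>X. dist z y \<le> r}"
    have "norm z \<le> norm (z - y) + norm y" using norm_triangle_ineq[of "z - y" y] by simp
    then show "z \<in> X \<inter> cball 0 (norm y + r)" using z by (auto simp: dist_norm)
  qed
  then show ?thesis using assms unfolding locally_finite_def by (blast intro: finite_subset)
qed

lemma kdist_lower:
  assumes lf: "locally_finite X" and k: "2 \<le> k" and x: "x \<in> X"
    and low: "\<forall>z\<in>X-{x}. m \<le> dist z y" and ex: "k \<le> card {z\<in>X. dist z y \<le> r0}"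
  shows "m \<le> kdist X y k"
  unfolding kdist_def
proof (rule cInf_greatest)
  show "{r. k \<le> card {z\<in>X. dist z y \<le> r}} \<noteq> {}" using ex by blast
  fix r assume r: "r \<in> {r. k \<le> card {z\<in>X. dist z y \<le> r}}"
  show "m \<le> r"
  proof (rule ccontr)
    assume "\<not> m \<le> r"
    then have "{z\<in>X. dist z y \<le> r} \<subseteq> {x}" using low by force
    then have "card {z\<in>X. dist z y \<le> r} \<le> card {x}" by (intro card_mono) auto
    with r k show False by simp
  qed
qed

lemma kdist_upper:
  assumes k: "1 \<le> k" and ex: "k \<le> card {z\<in>X. dist z y \<le> r0}"
  shows "kdist X y k \<le> r0"
  unfolding kdist_def
proof (rule cInf_lower)
  show "r0 \<in> {r. k \<le> card {z\<in>X. dist z y \<le> r}}" using ex by simp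
  show "bdd_below {r. k \<le> card {z\<in>X. dist z y \<le> r}}"
  proof (rule bdd_belowI)
    fix r assume r: "r \<in> {r. k \<le> card {z\<in>X. dist z y \<le> r}}"
    then have "card {z\<in>X. dist z y \<le> r} \<noteq> 0" using k by simp
    then obtain z where "z \<in> X" "dist z y \<le> r" by (metis (no_types, lifting) card.empty empty_Collect_eq)
    then show "0 \<le> r" using zero_le_dist[of z y] by linarith
  qed
qed

theorem lemma6:
  fixes X :: "pt set" and x x' x'' c :: pt and \<alpha> \<theta> u p q :: real
  assumes lf: "locally_finite X"
    and card: "infinite X \<or> card X > 2"
    and alpha: "\<alpha> > 0" and theta: "\<theta> > 0" and u: "0 < u" "u < 1"
    and pq: "p > 0" "q > 0"
    and xX: "x \<in> X"
    and x'X: "x' \<in> X - {x}" and x''X: "x'' \<in> X - {x}" and dist': "x' \<noteq> x''"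
    and corner: "c \<in> frontier (Qcell X x (rho_star p q \<alpha> \<theta> u))"
    and on': "c \<in> ratio_circle x x' (rho_star p q \<alpha> \<theta> u)"
    and on'': "c \<in> ratio_circle x x'' (rho_star p q \<alpha> \<theta> u)"
    and arc': "c \<in> closure (frontier (Qcell X x (rho_star p q \<alpha> \<theta> u))
                  \<inter> ratio_circle x x' (rho_star p q \<alpha> \<theta> u)
                  - ratio_circle x x'' (rho_star p q \<alpha> \<theta> u))"
    and arc'': "c \<in> closure (frontier (Qcell X x (rho_star p q \<alpha> \<theta> u))
                  \<inter> ratio_circle x x'' (rho_star p q \<alpha> \<theta> u)
                  - ratio_circle x x' (rho_star p q \<alpha> \<theta> u))"
    and minimal: "\<forall>z\<in>X - {x}. dist x' c \<le> dist z c \<and> dist x'' c \<le> dist z c"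
    and only: "\<forall>z\<in>X - {x, x', x''}. dist x' c < dist z c"
    and nearest: "\<forall>z\<in>X. dist x c \<le> dist z c"
  shows "succ_prob p q \<alpha> \<theta> (dist x c) (kdist X c 2) (kdist X c 3) = u
         \<and> c \<in> frontier (Q2cell X x p q \<alpha> \<theta> u)"
proof -
  define t where "t = F_H_inv p q (1 - u)"
  define \<rho> where "\<rho> = rho_star p q \<alpha> \<theta> u"
  note FP = F_H_props[OF pq]
  have qp: "t > 0" "F_H p q t = 1 - u" "\<And>s. s < t \<Longrightarrow> F_H p q s < 1 - u"
    using quantile_props[OF FP(1) FP(2) FP(3) FP(4), of "1 - u"] u unfolding t_def F_H_inv_def by auto
  have rho: "\<rho> = (\<theta> / t) powr (1 / \<alpha>)" unfolding \<rho>_def rho_star_def t_def ..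
  have rho_pos: "\<rho> > 0" using theta qp(1) rho by simp
  have rho_pow: "\<rho> powr \<alpha> = \<theta> / t"
    using rho alpha theta qp(1) by (simp add: powr_powr)
  have d': "dist x' c = \<rho> * dist x c" using on' unfolding ratio_circle_def \<rho>_def by simp
  have d'': "dist x'' c = \<rho> * dist x c" using on'' unfolding ratio_circle_def \<rho>_def by simp
  have xx': "x' \<noteq> x" "x'' \<noteq> x" "x' \<in> X" "x'' \<in> X" using x'X x''X by auto
  have r1pos: "dist x c > 0"
  proof (rule ccontr)
    assume "\<not> dist x c > 0"
    then have "dist x c = 0" by (simp add: not_less)
    then have "x = c" "x' = c" using d' by auto
    with xx' show False by simp
  qed
  have rho_ge1: "\<rho> \<ge> 1"
  proof -
    have "1 * dist x c \<le> \<rho> * dist x c" using nearest xx' d' by auto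
    then show ?thesis using r1pos by (simp add: mult_le_cancel_right)
  qed
  define R2 where "R2 = dist x' c"
  have sub3: "{x, x', x''} \<subseteq> {z\<in>X. dist z c \<le> R2}"
    using xX xx' nearest d' d'' unfolding R2_def by auto
  have c3: "card {x, x', x''} = 3" using xx' dist' by auto
  have card3: "3 \<le> card {z\<in>X. dist z c \<le> R2}"
    using card_mono[OF lf_finite[OF lf] sub3] c3 by simp
  have lowc: "\<forall>z\<in>X-{x}. R2 \<le> dist z c" using minimal unfolding R2_def by auto
  have k2: "kdist X c 2 = R2"
    using kdist_upper[of 2 X c R2] kdist_lower[OF lf _ xX lowc, of 2 R2] card3 by simp
  have k3: "kdist X c 3 = R2"
    using kdist_upper[of 3 X c R2] kdist_lower[OF lf _ xX lowc, of 3 R2] card3 by simp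
  have succ_c: "succ_prob p q \<alpha> \<theta> (dist x c) (kdist X c 2) (kdist X c 3) = u"
  proof -
    have "succ_prob p q \<alpha> \<theta> (dist x c) (kdist X c 2) (kdist X c 3)
        = succ_prob p q \<alpha> \<theta> (dist x c) (\<rho> * dist x c) (\<rho> * dist x c)"
      using k2 k3 d' unfolding R2_def by simp
    also have "\<dots> = measure (fad p q) {h. Hrat h > t}"
      by (rule succ_eq[OF pq theta qp(1) r1pos rho_pos rho_pow])
    also have "\<dots> = u" using FP(5)[of t] qp(2) by simp
    finally show ?thesis .
  qed
  have notin: "c \<notin> Q2cell X x p q \<alpha> \<theta> u"
    using succ_c unfolding Q2cell_def by simp
  have Qsub: "y \<in> Q2cell X x p q \<alpha> \<theta> u"
    if yQ: "y \<in> Qcell X x \<rho>" and yc: "dist y c < dist x c" for y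
  proof -
    have Qy: "\<forall>z\<in>X-{x}. dist z y > \<rho> * dist x y" using yQ unfolding Qcell_def by simp
    have r1y: "dist x y > 0"
      using dist_triangle[of x c y] yc by linarith
    have neary: "\<forall>z\<in>X. dist x y \<le> dist z y"
    proof
      fix z assume z: "z \<in> X"
      show "dist x y \<le> dist z y"
      proof (cases "z = x")
        case False
        then have "dist z y > \<rho> * dist x y" using Qy z by simp
        moreover have "\<rho> * dist x y \<ge> 1 * dist x y" using rho_ge1 r1y by (intro mult_right_mono) auto
        ultimately show ?thesis by simp
      qed simp
    qed
    define M where "M = {z\<in>X-{x}. dist z y \<le> dist x' y}"
    have Mfin: "finite M" unfolding M_def by (rule finite_subset[OF _ lf_finite[OF lf, of y "dist x' y"]]) auto
    have x'M: "x' \<in> M" unfolding M_def using xx' by simp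
    define m where "m = Min ((\<lambda>z. dist z y) ` M)"
    have "m \<in> (\<lambda>z. dist z y) ` M" unfolding m_def using Mfin x'M by (intro Min_in) auto
    then obtain z0 where z0: "z0 \<in> M" "m = dist z0 y" by auto
    have m_gt: "m > \<rho> * dist x y" using z0 Qy unfolding M_def by auto
    have mpos: "m > 0" using m_gt rho_pos r1y by (smt (verit) mult_pos_pos)
    have lowy: "\<forall>z\<in>X-{x}. m \<le> dist z y"
    proof
      fix z assume z: "z \<in> X - {x}"
      show "m \<le> dist z y"
      proof (cases "z \<in> M")
        case True
        then show ?thesis unfolding m_def using Mfin by (intro Min_le) auto
      next
        case False
        then have "dist z y > dist x' y" using z unfolding M_def by auto
        moreover have "m \<le> dist x' y" unfolding m_def using Mfin x'M by (intro Min_le) auto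
        ultimately show ?thesis by simp
      qed
    qed
    define R0 where "R0 = max (dist x y) (max (dist x' y) (dist x'' y))"
    have "{x, x', x''} \<subseteq> {z\<in>X. dist z y \<le> R0}" using xX xx' unfolding R0_def by auto
    then have cy: "3 \<le> card {z\<in>X. dist z y \<le> R0}"
      using card_mono[OF lf_finite[OF lf]] c3 by (metis (no_types, lifting))
    have k2y: "m \<le> kdist X y 2" using kdist_lower[OF lf _ xX lowy, of 2 R0] cy by simp
    have k3y: "m \<le> kdist X y 3" using kdist_lower[OF lf _ xX lowy, of 3 R0] cy by simp
    define s where "s = \<theta> * (dist x y / m) powr \<alpha>"
    have "dist x y / m < 1 / \<rho>" using m_gt mpos rho_pos by (simp add: field_simps)
    then have "(dist x y / m) powr \<alpha> < (1 / \<rho>) powr \<alpha>"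
      using alpha r1y mpos by (intro powr_less_mono2) auto
    also have "(1 / \<rho>) powr \<alpha> = t / \<theta>" using rho_pow by (simp add: powr_divide)
    finally have "s < t" unfolding s_def using theta by (simp add: field_simps)
    then have "F_H p q s < 1 - u" by (rule qp(3))
    then have "u < measure (fad p q) {h. Hrat h > s}" using FP(5)[of s] by simp
    also have "\<dots> \<le> succ_prob p q \<alpha> \<theta> (dist x y) (kdist X y 2) (kdist X y 3)"
      unfolding s_def by (rule succ_lower[OF pq theta alpha r1y mpos k2y k3y])
    finally show ?thesis unfolding Q2cell_def using neary by simp
  qed
  have "c \<in> closure (Qcell X x \<rho>)" using corner unfolding \<rho>_def frontier_def by simp
  then have "c \<in> closure (Q2cell X x p q \<alpha> \<theta> u)"
    unfolding closure_approachable
  proof (intro allI impI)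
    fix e :: real assume e: "e > 0"
    assume "\<forall>e>0. \<exists>y\<in>Qcell X x \<rho>. dist y c < e"
    then obtain y where y: "y \<in> Qcell X x \<rho>" "dist y c < min e (dist x c)"
      using e r1pos by (metis min_less_iff_conj)
    then show "\<exists>y\<in>Q2cell X x p q \<alpha> \<theta> u. dist y c < e" using Qsub by auto
  qed
  moreover have "c \<notin> interior (Q2cell X x p q \<alpha> \<theta> u)" using notin interior_subset by blast
  ultimately show ?thesis using succ_c unfolding frontier_def by simp
qed

end
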